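(* Assume $\|\hat F'(y)-\hat F'(x)\|_F\le L_{\hat F}\|y-x\|$ for all $x,y\in\mathcal F$, and that there is $\mu>0$ with $\sigma_{\min}(\hat F'(x)^* )\ge\sqrt\mu$ for all $x\in\mathcal F$. Let $\{x_k\}$ be generated by Scheme 1 with $\tau_k=\hat f_1(x_k)$. Then for all $k\in\mathbb Z_+$: $$\hat f_1(x_{k+1})\le\varepsilon_k+\begin{cases}\frac{\hat f_1(x_k)}2+\frac{L_{\hat F}}{\mu}\hat f_2(x_k)\le\frac34\hat f_1(x_k),&\text{if }\hat f_1(x_k)\le\frac{\mu}{4L_{\hat F}},\\ \hat f_1(x_k)-\frac{\mu}{16L_{\hat F}},&\text{otherwise.}\end{cases}$$ If moreover $L_k=L_{\hat F}$ is fixed while generating the sequence, then $$\hat f_1(x_{k+1})\le\varepsilon_k+\begin{cases}\frac{\hat f_1(x_k)}2+\frac{L_{\hat F}}{2\mu}\hat f_2(x_k)\le\frac34\hat f_1(x_k),&\text{if }\hat f_1(x_k)\le\frac{\mu}{2L_{\hat F}},\\ \hat f_1(x_k)-\frac{\mu}{8L_{\hat F}},&\text{otherwise.}\end{cases}$$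
   Context: Let $F:\mathbb R^n\to\mathbb R^m$ be smooth, $\hat F=\frac1{\sqrt m}F$ with Jacobian $\hat F'(x)$ and adjoint (transpose) $\hat F'(x)^*$; Euclidean norms, $\|\cdot\|_F$ Frobenius norm. $\hat f_1(x)=\|\hat F(x)\|$, $\hat f_2=\hat f_1^2$, $\phi(x,y)=\|\hat F(x)+\hat F'(x)(y-x)\|$, $\psi_{x,L,\tau}(y)=\frac\tau2+\frac{\phi(x,y)^2}{2\tau}+\frac L2\|y-x\|^2$, $T_{L,\tau}(x)=\arg\min_y\psi_{x,L,\tau}(y)$. $\mathcal F$ closed convex with nonempty interior, $\mathcal L(v)=\{x:\hat f_1(x)\le v\}$, $\mathcal L(\hat f_1(x_0))\subseteq\mathcal F$ and the generated sequence stays in $\mathcal F$. Scheme 1 (input $x_0$, a rule choosing $\varepsilon_k\ge0,\tau_k>0$, $L\in(0,L_{\hat F}]$, $L_0=L$): for $k=0,1,\dots$: choose $\tau_k,\varepsilon_k$; compute $x_{k+1}$ with $\psi_{x_k,L_k,\tau_k}(x_{k+1})-\psi_{x_k,L_k,\tau_k}(T_{L_k,\tau_k}(x_k))\le\varepsilon_k$ and $\hat f_1(x_k)\ge\psi_{x_k,L_k,\tau_k}(x_{k+1})$; if $\hat f_1(x_{k+1})>\psi_{x_k,L_k,\tau_k}(x_{k+1})$, set $L_k:=\min\{2L_k,2L_{\hat F}\}$ and repeat; otherwise $L_{k+1}=\max\{L_k/2,L\}$. *)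

theory Defs
  imports "HOL-Analysis.Analysis"
begin

definition Fhat :: "(real^'n \<Rightarrow> real^'m) \<Rightarrow> real^'n \<Rightarrow> real^'m" where
  "Fhat F x = (1 / sqrt (real CARD('m))) *\<^sub>R F x"

definition Jhat :: "(real^'n \<Rightarrow> real^'m) \<Rightarrow> real^'n \<Rightarrow> real^'n^'m" where
  "Jhat F x = jacobian (Fhat F) (at x)"

definition frob_norm :: "real^'n^'m \<Rightarrow> real" where
  "frob_norm A = sqrt (\<Sum>i\<in>UNIV. \<Sum>j\<in>UNIV. (A $ i $ j)\<^sup>2)"

definition sigma_min :: "real^'c^'r \<Rightarrow> real" where
  "sigma_min B = Inf ((\<lambda>v. norm (B *v v)) ` {v. norm v = 1})"

definition f1 :: "(real^'n \<Rightarrow> real^'m) \<Rightarrow> real^'n \<Rightarrow> real" where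
  "f1 F x = norm (Fhat F x)"

definition f2 :: "(real^'n \<Rightarrow> real^'m) \<Rightarrow> real^'n \<Rightarrow> real" where
  "f2 F x = (f1 F x)\<^sup>2"

definition phi :: "(real^'n \<Rightarrow> real^'m) \<Rightarrow> real^'n \<Rightarrow> real^'n \<Rightarrow> real" where
  "phi F x y = norm (Fhat F x + Jhat F x *v (y - x))"

definition psi :: "(real^'n \<Rightarrow> real^'m) \<Rightarrow> real^'n \<Rightarrow> real \<Rightarrow> real \<Rightarrow> real^'n \<Rightarrow> real" where
  "psi F x L \<tau> y = \<tau> / 2 + (phi F x y)\<^sup>2 / (2 * \<tau>) + L / 2 * (norm (y - x))\<^sup>2"

definition Tmap :: "(real^'n \<Rightarrow> real^'m) \<Rightarrow> real \<Rightarrow> real \<Rightarrow> real^'n \<Rightarrow> real^'n" where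
  "Tmap F L \<tau> x = arg_min (psi F x L \<tau>) (\<lambda>_. True)"

definition sublevel :: "(real^'n \<Rightarrow> real^'m) \<Rightarrow> real \<Rightarrow> (real^'n) set" where
  "sublevel F v = {x. f1 F x \<le> v}"

definition trialL :: "real \<Rightarrow> real \<Rightarrow> nat \<Rightarrow> real" where
  "trialL LF Ls i = ((\<lambda>l. min (2 * l) (2 * LF)) ^^ i) Ls"

text \<open>At iteration k, trial points y 0, ..., y j are computed with L-values trialL LF (Ls k) i;
  trials i < j are rejected, trial j is accepted and y j = x (k+1).\<close>
definition scheme1 ::
  "(real^'n \<Rightarrow> real^'m) \<Rightarrow> real \<Rightarrow> real \<Rightarrow> (nat \<Rightarrow> real^'n) \<Rightarrow> (nat \<Rightarrow> real)
     \<Rightarrow> (nat \<Rightarrow> real) \<Rightarrow> (nat \<Rightarrow> real) \<Rightarrow> bool" where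
  "scheme1 F LF L x \<tau> \<epsilon> Lk \<longleftrightarrow>
     0 < L \<and> L \<le> LF \<and>
     (\<forall>k. 0 \<le> \<epsilon> k \<and> 0 < \<tau> k) \<and>
     (\<exists>Ls :: nat \<Rightarrow> real.
        Ls 0 = L \<and>
        (\<forall>k. Ls (Suc k) = max (Lk k / 2) L) \<and>
        (\<forall>k. \<exists>(j::nat) (y :: nat \<Rightarrow> real^'n).
            y j = x (Suc k) \<and> Lk k = trialL LF (Ls k) j \<and>
            (\<forall>i\<le>j.
               psi F (x k) (trialL LF (Ls k) i) (\<tau> k) (y i)
                 - psi F (x k) (trialL LF (Ls k) i) (\<tau> k)
                     (Tmap F (trialL LF (Ls k) i) (\<tau> k) (x k)) \<le> \<epsilon> k \<and>
               f1 F (x k) \<ge> psi F (x k) (trialL LF (Ls k) i) (\<tau> k) (y i)) \<and>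
            (\<forall>i<j. f1 F (y i) > psi F (x k) (trialL LF (Ls k) i) (\<tau> k) (y i)) \<and>
            f1 F (y j) \<le> psi F (x k) (trialL LF (Ls k) j) (\<tau> k) (y j)))"

end

theory Submission
  imports Defs
begin


lemma dot_transp: "(w::real^'m) \<bullet> ((J::real^'n^'m) *v h) = (transpose J *v w) \<bullet> h"
  unfolding inner_vec_def matrix_vector_mult_def transpose_def
  by (simp add: sum_distrib_left sum_distrib_right mult_ac) (rule sum.swap)

lemma right_inv:
  fixes J :: "real^'n^'m" and b :: "real^'m"
  assumes mu: "\<mu> > 0" and low: "\<And>v. sqrt \<mu> * norm v \<le> norm (transpose J *v v)"
  shows "\<exists>h. J *v h = b \<and> sqrt \<mu> * norm h \<le> norm b"
proof -
  define A where "A = J ** transpose J"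
  have Aw: "w \<bullet> (A *v w) = (norm (transpose J *v w))\<^sup>2" for w
    by (simp add: A_def matrix_vector_mul_assoc[symmetric] dot_transp power2_norm_eq_inner)
  have "inj ((*v) A)"
    unfolding vec.inj_iff_eq_0
  proof (intro allI impI)
    fix w assume "A *v w = 0"
    then have "norm (transpose J *v w) = 0" using Aw[of w] by simp
    then have "sqrt \<mu> * norm w \<le> 0" using low[of w] by simp
    then show "w = 0" using mu by (simp add: mult_le_0_iff)
  qed
  then have "surj ((*v) A)" using matrix_left_invertible_injective matrix_left_right_inverse
      matrix_right_invertible_surjective by metis
  then obtain w where w: "A *v w = b" by (metis surjD)
  define h where "h = transpose J *v w"
  have Jh: "J *v h = b" using w unfolding h_def A_def by (simp only: matrix_vector_mul_assoc)
  have h2: "(norm h)\<^sup>2 \<le> norm w * norm b"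
    using Aw[of w] w Cauchy_Schwarz_ineq2[of w b] by (simp add: h_def)
  have hw: "sqrt \<mu> * norm w \<le> norm h" using low[of w] by (simp add: h_def)
  have "sqrt \<mu> * norm h \<le> norm b"
  proof (cases "h = 0")
    case True then show ?thesis by simp
  next
    case False
    then have hp: "norm h > 0" by simp
    have "sqrt \<mu> * (norm h)\<^sup>2 \<le> sqrt \<mu> * (norm w * norm b)"
      using h2 mu by (simp add: mult_left_mono)
    also have "\<dots> = (sqrt \<mu> * norm w) * norm b" by simp
    also have "\<dots> \<le> norm h * norm b" using hw by (simp add: mult_right_mono)
    finally have "norm h * (sqrt \<mu> * norm h) \<le> norm h * norm b"
      by (simp add: power2_eq_square mult_ac)
    then show ?thesis using hp by simp
  qed
  then show ?thesis using Jh by blast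
qed

lemma sigma_bound:
  fixes B :: "real^'c^'r"
  assumes "sigma_min B \<ge> s"
  shows "s * norm v \<le> norm (B *v v)"
proof (cases "v = 0")
  case True
  have "s \<le> norm (B *v (axis undefined 1))"
    using assms unfolding sigma_min_def
    by (rule order_trans, intro cInf_lower) (auto intro!: bdd_belowI[where m=0])
  then show ?thesis using True by simp
next
  case False
  then have np: "norm v > 0" by simp
  have "s \<le> norm (B *v ((1/norm v) *\<^sub>R v))"
    using assms unfolding sigma_min_def
    by (rule order_trans, intro cInf_lower) (use np in \<open>auto intro!: bdd_belowI[where m=0]\<close>)
  also have "\<dots> = norm (B *v v) / norm v"
    by (simp add: matrix_vector_mult_scaleR)
  finally show ?thesis using np by (simp add: field_simps)
qed

lemma psi_cont: "continuous_on UNIV (psi F x L \<tau>)"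
  unfolding psi_def phi_def divide_inverse
  by (intro continuous_intros continuous_on_compose2[OF matrix_vector_mult_linear_continuous_on]) auto

lemma Tmap_min:
  assumes L: "L > 0" and t: "\<tau> > 0"
  shows "psi F x L \<tau> (Tmap F L \<tau> x) \<le> psi F x L \<tau> y"
proof -
  let ?P = "psi F x L \<tau>"
  have lowb: "L/2 * (norm (z - x))\<^sup>2 \<le> ?P z" for z
  proof -
    have "0 \<le> \<tau>/2" "0 \<le> (phi F x z)\<^sup>2 / (2 * \<tau>)" using t by auto
    then show ?thesis unfolding psi_def by linarith
  qed
  define R where "R = sqrt (2 * ?P x / L)"
  have Px0: "?P x \<ge> 0" using lowb[of x] by simp
  have R0: "R \<ge> 0" unfolding R_def using Px0 L by simp
  have "\<exists>z\<in>cball x R. \<forall>y\<in>cball x R. ?P z \<le> ?P y"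
    by (rule continuous_attains_inf) (use R0 in \<open>auto intro: continuous_on_subset[OF psi_cont]\<close>)
  then obtain z where z: "z \<in> cball x R" "\<And>y. y \<in> cball x R \<Longrightarrow> ?P z \<le> ?P y"
    by blast
  have zall: "?P z \<le> ?P y" for y
  proof (cases "y \<in> cball x R")
    case True then show ?thesis using z by blast
  next
    case False
    then have "norm (y - x) > R" by (simp add: dist_norm norm_minus_commute)
    then have "R\<^sup>2 < (norm (y - x))\<^sup>2" using R0
      by (intro power_strict_mono) auto
    moreover have "R\<^sup>2 = 2 * ?P x / L" unfolding R_def using Px0 L by simp
    ultimately have "?P x < L/2 * (norm (y - x))\<^sup>2" using L by (simp add: field_simps)
    moreover have "?P z \<le> ?P x" using z(2)[of x] R0 by simp
    ultimately show ?thesis using lowb[of y] by linarith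
  qed
  have "is_arg_min ?P (\<lambda>_. True) z" unfolding is_arg_min_def using zall by (simp add: not_less)
  then have "is_arg_min ?P (\<lambda>_. True) (Tmap F L \<tau> x)"
    unfolding Tmap_def arg_min_def by (rule someI)
  then show ?thesis unfolding is_arg_min_def by (simp add: not_less)
qed


lemma step_bound:
  fixes F :: "real^'n \<Rightarrow> real^'m"
  assumes Lv: "Lv > 0" and fpos: "f1 F xk > 0" and mu: "\<mu> > 0"
    and sig: "sigma_min (transpose (Jhat F xk)) \<ge> sqrt \<mu>"
    and acc: "f1 F y \<le> psi F xk Lv (f1 F xk) y"
    and eps: "psi F xk Lv (f1 F xk) y - psi F xk Lv (f1 F xk) (Tmap F Lv (f1 F xk) xk) \<le> e"
    and t: "0 \<le> t" "t \<le> 1"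
  shows "f1 F y \<le> e + f1 F xk / 2 + (1 - t)\<^sup>2 * f1 F xk / 2 + Lv * t\<^sup>2 * (f1 F xk)\<^sup>2 / (2 * \<mu>)"
proof -
  define f where "f = f1 F xk"
  define b where "b = Fhat F xk"
  have nb: "norm b = f" unfolding b_def f_def f1_def by simp
  have low: "sqrt \<mu> * norm v \<le> norm (transpose (Jhat F xk) *v v)" for v :: "real^'m" 
    by (rule sigma_bound[OF sig])
  obtain h where h: "Jhat F xk *v h = b" "sqrt \<mu> * norm h \<le> norm b"
    using right_inv[OF mu, of "Jhat F xk" b] low by auto
  have h2: "\<mu> * (norm h)\<^sup>2 \<le> f\<^sup>2"
  proof -
    have "(sqrt \<mu> * norm h)\<^sup>2 \<le> f\<^sup>2" using h(2) nb mu by (intro power_mono) auto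
    then show ?thesis using mu by (simp add: power_mult_distrib)
  qed
  have h2': "(norm h)\<^sup>2 \<le> f\<^sup>2 / \<mu>" using h2 mu by (simp add: field_simps)
  define z where "z = xk - t *\<^sub>R h"
  have phiz: "phi F xk z = (1 - t) * f"
  proof -
    have "z - xk = (-t) *\<^sub>R h" unfolding z_def by simp
    then have "Fhat F xk + Jhat F xk *v (z - xk) = b + (-t) *\<^sub>R b"
      using h(1) b_def by (simp only: matrix_vector_mult_scaleR)
    then have "Fhat F xk + Jhat F xk *v (z - xk) = (1 - t) *\<^sub>R b"
      by (simp add: algebra_simps)
    then show ?thesis unfolding phi_def using nb t by simp
  qed
  have nz: "(norm (z - xk))\<^sup>2 = t\<^sup>2 * (norm h)\<^sup>2" unfolding z_def using t
    by (simp add: power_mult_distrib)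
  have fp: "f > 0" using fpos f_def by simp
  have "psi F xk Lv f z = f/2 + (1 - t)\<^sup>2 * f / 2 + Lv / 2 * (t\<^sup>2 * (norm h)\<^sup>2)"
    unfolding psi_def phiz nz using fp by (simp add: power2_eq_square field_simps)
  also have "\<dots> \<le> f/2 + (1 - t)\<^sup>2 * f / 2 + Lv / 2 * (t\<^sup>2 * (f\<^sup>2 / \<mu>))"
    using h2' Lv by (intro add_left_mono mult_left_mono) auto
  also have "\<dots> = f/2 + (1 - t)\<^sup>2 * f / 2 + Lv * t\<^sup>2 * f\<^sup>2 / (2 * \<mu>)" by simp
  finally have pz: "psi F xk Lv f z \<le> f/2 + (1 - t)\<^sup>2 * f / 2 + Lv * t\<^sup>2 * f\<^sup>2 / (2 * \<mu>)" .
  have "psi F xk Lv f (Tmap F Lv f xk) \<le> psi F xk Lv f z" by (rule Tmap_min[OF Lv fp])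
  then show ?thesis using pz acc eps unfolding f_def[symmetric] by linarith
qed

lemma opt_t:
  fixes f \<mu> Lv :: real
  assumes "f > 0" "\<mu> > 0" "Lv > 0"
  shows "f/2 + (1 - \<mu>/(\<mu> + Lv*f))\<^sup>2 * f / 2 + Lv * (\<mu>/(\<mu> + Lv*f))\<^sup>2 * f\<^sup>2 / (2 * \<mu>)
        = f - f * \<mu> / (2 * (\<mu> + Lv * f))"
proof -
  define D where "D = \<mu> + Lv * f"
  have D: "D > 0" using assms by (simp add: D_def add_pos_pos)
  have e1: "1 - \<mu>/D = Lv*f/D" using D by (simp add: D_def field_simps)
  have "f/2 + (1 - \<mu>/D)\<^sup>2 * f / 2 + Lv * (\<mu>/D)\<^sup>2 * f\<^sup>2 / (2 * \<mu>)
      = f/2 + Lv * f\<^sup>2 * (Lv * f + \<mu>) / (2 * D\<^sup>2)"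
    unfolding e1 using D assms by (simp add: field_simps power2_eq_square)
  also have "\<dots> = f/2 + Lv * f\<^sup>2 / (2 * D)"
  proof -
    have "Lv * f + \<mu> = D" by (simp add: D_def)
    then show ?thesis using D by (simp add: power2_eq_square)
  qed
  also have "\<dots> = f - f * \<mu> / (2 * D)" using D by (simp add: D_def field_simps power2_eq_square)
  finally show ?thesis unfolding D_def .
qed

lemma trialL_bounds:
  assumes "0 < l" "0 < LF"
  shows "0 < trialL LF l i \<and> trialL LF l i \<le> max l (2 * LF)"
  using assms by (induction i) (auto simp: trialL_def)


lemma gen_arith:
  fixes f \<mu> Lv c Y e :: real
  assumes f: "f > 0" and mu: "\<mu> > 0" and Lv: "Lv > 0" and c: "Lv \<le> c"
    and B: "\<And>t. 0 \<le> t \<Longrightarrow> t \<le> 1 \<Longrightarrow> Y \<le> e + f/2 + (1-t)\<^sup>2 * f / 2 + Lv * t\<^sup>2 * f\<^sup>2 / (2 * \<mu>)"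
  shows "Y \<le> e + (if f \<le> \<mu> / (2 * c) then f/2 + c / (2 * \<mu>) * f\<^sup>2 else f - \<mu> / (8 * c))
     \<and> (f \<le> \<mu> / (2 * c) \<longrightarrow> f/2 + c / (2 * \<mu>) * f\<^sup>2 \<le> 3/4 * f)"
proof -
  have cp: "c > 0" using Lv c by simp
  have P1: "Y \<le> e + (f/2 + c / (2 * \<mu>) * f\<^sup>2)"
  proof -
    have "Lv * f\<^sup>2 / (2 * \<mu>) \<le> c * f\<^sup>2 / (2 * \<mu>)"
      using c mu by (intro divide_right_mono mult_right_mono) auto
    then show ?thesis using B[of 1] by simp
  qed
  have P2: "f/2 + c / (2 * \<mu>) * f\<^sup>2 \<le> 3/4 * f" if h: "f \<le> \<mu> / (2 * c)"
  proof -
    have "c * f \<le> \<mu> / 2" using h cp by (simp add: field_simps)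
    then have "c * f * f \<le> \<mu> / 2 * f" using f by (intro mult_right_mono) auto
    then have "c / (2 * \<mu>) * f\<^sup>2 \<le> f / 4" using mu by (simp add: field_simps power2_eq_square)
    then show ?thesis by simp
  qed
  have P3: "Y \<le> e + (f - \<mu> / (8 * c))" if h: "\<not> f \<le> \<mu> / (2 * c)"
  proof -
    define D where "D = \<mu> + Lv * f"
    have D: "D > 0" using mu Lv f by (simp add: D_def add_pos_pos)
    have t0: "0 \<le> \<mu>/D" "\<mu>/D \<le> 1" using D mu Lv f by (auto simp: D_def field_simps)
    have "Y \<le> e + (f - f * \<mu> / (2 * D))"
    proof -
      have "Y \<le> e + (f/2 + (1 - \<mu>/D)\<^sup>2 * f / 2 + Lv * (\<mu>/D)\<^sup>2 * f\<^sup>2 / (2 * \<mu>))"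
        using B[OF t0] by (simp only: add.assoc)
      then show ?thesis using opt_t[OF f mu Lv] unfolding D_def by simp
    qed
    moreover have "\<mu> / (8 * c) \<le> f * \<mu> / (2 * D)"
    proof -
      have "\<mu> < 2 * c * f" using h cp by (simp add: field_simps)
      moreover have "Lv * f \<le> c * f" using c f by (intro mult_right_mono) auto
      moreover have "c * f > 0" using cp f by simp
      ultimately have "D \<le> 4 * c * f" unfolding D_def by linarith
      then have "\<mu> * D \<le> \<mu> * (4 * c * f)" using mu by (intro mult_left_mono) auto
      then show ?thesis using D cp by (simp add: field_simps)
    qed
    ultimately show ?thesis by linarith
  qed
  show ?thesis using P1 P2 P3 by auto
qed

theorem theorem3:
  fixes F :: "real^'n \<Rightarrow> real^'m"
    and S :: "(real^'n) set"
    and LF L \<mu> :: real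
    and x :: "nat \<Rightarrow> real^'n"
    and \<tau> \<epsilon> Lk :: "nat \<Rightarrow> real"
  assumes F_diff: "\<And>z. F differentiable (at z)"
    and F_C1: "continuous_on UNIV (\<lambda>z. jacobian F (at z))"
    and S_closed: "closed S" and S_convex: "convex S" and S_int: "interior S \<noteq> {}"
    and S_level: "sublevel F (f1 F (x 0)) \<subseteq> S"
    and x_in_S: "\<And>k. x k \<in> S"
    and Lip: "\<And>u v. u \<in> S \<Longrightarrow> v \<in> S \<Longrightarrow> frob_norm (Jhat F v - Jhat F u) \<le> LF * norm (v - u)"
    and mu_pos: "\<mu> > 0"
    and sigma: "\<And>u. u \<in> S \<Longrightarrow> sigma_min (transpose (Jhat F u)) \<ge> sqrt \<mu>"
    and scheme: "scheme1 F LF L x \<tau> \<epsilon> Lk"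
    and tau_def: "\<And>k. \<tau> k = f1 F (x k)"
  shows "(\<forall>k. f1 F (x (Suc k)) \<le> \<epsilon> k +
              (if f1 F (x k) \<le> \<mu> / (4 * LF)
               then f1 F (x k) / 2 + LF / \<mu> * f2 F (x k)
               else f1 F (x k) - \<mu> / (16 * LF))
            \<and> (f1 F (x k) \<le> \<mu> / (4 * LF) \<longrightarrow>
                 f1 F (x k) / 2 + LF / \<mu> * f2 F (x k) \<le> 3 / 4 * f1 F (x k)))
       \<and> ((\<forall>k. Lk k = LF) \<longrightarrow>
          (\<forall>k. f1 F (x (Suc k)) \<le> \<epsilon> k +
              (if f1 F (x k) \<le> \<mu> / (2 * LF)
               then f1 F (x k) / 2 + LF / (2 * \<mu>) * f2 F (x k)
               else f1 F (x k) - \<mu> / (8 * LF))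
            \<and> (f1 F (x k) \<le> \<mu> / (2 * LF) \<longrightarrow>
                 f1 F (x k) / 2 + LF / (2 * \<mu>) * f2 F (x k) \<le> 3 / 4 * f1 F (x k))))"
  proof -
  have L0: "0 < L" and LLF: "L \<le> LF" and tau_pos: "\<And>k. 0 < \<tau> k"
    using scheme unfolding scheme1_def by auto
  have LFp: "LF > 0" using L0 LLF by simp
  obtain Ls :: "nat \<Rightarrow> real" where Ls0: "Ls 0 = L"
    and LsS: "\<And>k. Ls (Suc k) = max (Lk k / 2) L"
    and it: "\<And>k. \<exists>(j::nat) (y :: nat \<Rightarrow> real^'n).
            y j = x (Suc k) \<and> Lk k = trialL LF (Ls k) j \<and>
            (\<forall>i\<le>j.
               psi F (x k) (trialL LF (Ls k) i) (\<tau> k) (y i)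
                 - psi F (x k) (trialL LF (Ls k) i) (\<tau> k)
                     (Tmap F (trialL LF (Ls k) i) (\<tau> k) (x k)) \<le> \<epsilon> k \<and>
               f1 F (x k) \<ge> psi F (x k) (trialL LF (Ls k) i) (\<tau> k) (y i)) \<and>
            (\<forall>i<j. f1 F (y i) > psi F (x k) (trialL LF (Ls k) i) (\<tau> k) (y i)) \<and>
            f1 F (y j) \<le> psi F (x k) (trialL LF (Ls k) j) (\<tau> k) (y j)"
    using scheme unfolding scheme1_def by metis
  have Lkb: "0 < Lk k \<and> Lk k \<le> max (Ls k) (2 * LF)" if "0 < Ls k" for k
  proof -
    obtain j y where "Lk k = trialL LF (Ls k) j" using it[of k] by blast
    then show ?thesis using trialL_bounds[OF that LFp] by simp
  qed
  have Lsb: "0 < Ls k \<and> Ls k \<le> LF" for k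
  proof (induction k)
    case 0 then show ?case using Ls0 L0 LLF by simp
  next
    case (Suc k)
    then have "0 < Lk k \<and> Lk k \<le> 2 * LF" using Lkb[of k] LFp by auto
    then show ?case using LsS[of k] L0 LLF by auto
  qed
  have Lk2: "0 < Lk k \<and> Lk k \<le> 2 * LF" for k using Lkb[of k] Lsb[of k] LFp by auto
  have KEY: "f1 F (x (Suc k)) \<le> \<epsilon> k + f1 F (x k) / 2 + (1 - t)\<^sup>2 * f1 F (x k) / 2
      + Lk k * t\<^sup>2 * (f1 F (x k))\<^sup>2 / (2 * \<mu>)" if t: "0 \<le> t" "t \<le> 1" for k t
  proof -
    obtain j y where yj: "y j = x (Suc k)" and Lkj: "Lk k = trialL LF (Ls k) j"
      and all: "\<forall>i\<le>j.
               psi F (x k) (trialL LF (Ls k) i) (\<tau> k) (y i)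
                 - psi F (x k) (trialL LF (Ls k) i) (\<tau> k)
                     (Tmap F (trialL LF (Ls k) i) (\<tau> k) (x k)) \<le> \<epsilon> k"
      and last: "f1 F (y j) \<le> psi F (x k) (trialL LF (Ls k) j) (\<tau> k) (y j)"
      using it[of k] by blast
    have e: "psi F (x k) (Lk k) (f1 F (x k)) (x (Suc k))
         - psi F (x k) (Lk k) (f1 F (x k)) (Tmap F (Lk k) (f1 F (x k)) (x k)) \<le> \<epsilon> k"
      using all yj Lkj tau_def[of k] by auto
    have a: "f1 F (x (Suc k)) \<le> psi F (x k) (Lk k) (f1 F (x k)) (x (Suc k))"
      using last yj Lkj tau_def[of k] by simp
    have fp: "f1 F (x k) > 0" using tau_pos[of k] tau_def[of k] by simp
    show ?thesis
      by (rule step_bound[OF _ fp mu_pos sigma[OF x_in_S] a e t]) (use Lk2[of k] in simp)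
  qed
  have fp: "f1 F (x k) > 0" for k using tau_pos[of k] tau_def[of k] by simp
  have P1: "f1 F (x (Suc k)) \<le> \<epsilon> k +
              (if f1 F (x k) \<le> \<mu> / (4 * LF)
               then f1 F (x k) / 2 + LF / \<mu> * f2 F (x k)
               else f1 F (x k) - \<mu> / (16 * LF))
            \<and> (f1 F (x k) \<le> \<mu> / (4 * LF) \<longrightarrow>
                 f1 F (x k) / 2 + LF / \<mu> * f2 F (x k) \<le> 3 / 4 * f1 F (x k))" for k
  proof -
    have "f1 F (x (Suc k)) \<le> \<epsilon> k + (if f1 F (x k) \<le> \<mu> / (2 * (2*LF))
          then f1 F (x k)/2 + (2*LF) / (2 * \<mu>) * (f1 F (x k))\<^sup>2 else f1 F (x k) - \<mu> / (8 * (2*LF)))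
     \<and> (f1 F (x k) \<le> \<mu> / (2 * (2*LF)) \<longrightarrow> f1 F (x k)/2 + (2*LF) / (2 * \<mu>) * (f1 F (x k))\<^sup>2 \<le> 3/4 * f1 F (x k))" (is ?Y)
      by (rule gen_arith[OF fp mu_pos _ _ KEY]) (use Lk2[of k] in auto)
    note Y = this
    have eqs: "(2*LF) / (2 * \<mu>) = LF / \<mu>" "\<mu> / (2 * (2*LF)) = \<mu> / (4 * LF)"
      "\<mu> / (8 * (2*LF)) = \<mu> / (16 * LF)" by simp_all
    have X: "f1 F (x (Suc k)) \<le> \<epsilon> k + (if f1 F (x k) \<le> \<mu> / (4 * LF)
          then f1 F (x k)/2 + LF / \<mu> * (f1 F (x k))\<^sup>2 else f1 F (x k) - \<mu> / (16 * LF))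
     \<and> (f1 F (x k) \<le> \<mu> / (4 * LF) \<longrightarrow> f1 F (x k)/2 + LF / \<mu> * (f1 F (x k))\<^sup>2 \<le> 3/4 * f1 F (x k))"
      using Y unfolding eqs .
    show ?thesis unfolding f2_def by (rule X)
  qed
  have P2: "f1 F (x (Suc k)) \<le> \<epsilon> k +
              (if f1 F (x k) \<le> \<mu> / (2 * LF)
               then f1 F (x k) / 2 + LF / (2 * \<mu>) * f2 F (x k)
               else f1 F (x k) - \<mu> / (8 * LF))
            \<and> (f1 F (x k) \<le> \<mu> / (2 * LF) \<longrightarrow>
                 f1 F (x k) / 2 + LF / (2 * \<mu>) * f2 F (x k) \<le> 3 / 4 * f1 F (x k))"
    if hfix: "\<forall>k. Lk k = LF" for k
    unfolding f2_def
    by (rule gen_arith[OF fp mu_pos _ _ KEY]) (use hfix LFp in auto)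
  show ?thesis using P1 P2 by blast
qed

end
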